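(* In the periodic setting below, let $0<d\le2$ and $t_0\in\mathbb R$. For any $u^0\in l^{\infty,+}$: if $u^0\le d\phi(t_0,\cdot)+d_1\phi_1(t_0,\cdot)$ (resp. $u^0\ge d\phi(t_0,\cdot)-d_1\phi_1(t_0,\cdot)$), then for $d_1/d$ sufficiently large, $u(t;t_0,u^0)\le d\phi(t,\cdot)+d_1\phi_1(t,\cdot)$ (resp. $u(t;t_0,u^0)\ge d\phi(t,\cdot)-d_1\phi_1(t,\cdot)$) for all $t\ge t_0$.
   Context: Periodic setting: equation (E) is $\dot u_j=d(t,j+1)(u_{j+1}-u_j)+d(t,j-1)(u_{j-1}-u_j)+u_jf(t,j,u_j)$, $j\in\mathbb Z$, with $d$ bounded, $\inf d>0$, $d(t+T,j)=d(t,j+J)=d(t,j)$, $f(t+T,j,u)=f(t,j+J,u)=f(t,j,u)$ ($T>0$, $J\in\mathbb Z^+$), and $f$ satisfying (H0): locally Hölder in $t$, Lipschitz in $u$, $C^1$ in $u$ for $u\ge0$, $f(t,j,u)=f(t,j,0)$ for $u\le0$, $f<0$ for $u\ge M_0$, $f_u<0$ for $u\ge0$, $\liminf_{t-s\to\infty}\frac1{t-s}\int_s^t\inf_jf(\tau,j,0)d\tau>0$. $u(t;s,u^0)$ is the solution of (E) with $u(s;s,u^0)=u^0$; $l^{\infty,+}$ is the set of bounded nonnegative sequences; inequalities between sequences are componentwise. For $\mu\in\mathbb R$, $\lambda(\mu)$ and $\psi^\mu(t,j)>0$ ($T$-periodic in $t$, $J$-periodic in $j$, $\|\psi^\mu(0,\cdot)\|_\infty=1$)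 are such that $e^{\lambda(\mu)t}\psi^\mu(t,j)$ solves $\dot v_j=d(t,j-1)(e^\mu v_{j-1}-v_j)+d(t,j+1)(e^{-\mu}v_{j+1}-v_j)+f(t,j,0)v_j$. $\mu^*>0$ minimizes $\lambda(\mu)/\mu$ over $\mu>0$, $c^*=\lambda(\mu^* )/\mu^*$. Fix $c>c^*$ and $0<\mu<\mu'<\min\{2\mu,\mu^*\}$ with $c=\lambda(\mu)/\mu$ and $\lambda(\mu)/\mu>\lambda(\mu')/\mu'>c^*$. Set $\phi(t,j)=e^{-\mu(j-ct)}\psi^\mu(t,j)$ and $\phi_1(t,j)=e^{-\mu'(j-ct)}\psi^{\mu'}(t,j)$. *)

theory Defs
  imports "HOL-Analysis.Analysis"
begin

definition E_rhs ::
  "(real \<Rightarrow> int \<Rightarrow> real) \<Rightarrow> (real \<Rightarrow> int \<Rightarrow> real \<Rightarrow> real) \<Rightarrow> real \<Rightarrow> (int \<Rightarrow> real) \<Rightarrow> int \<Rightarrow> real"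
  where "E_rhs d f t u j =
     d t (j + 1) * (u (j + 1) - u j) + d t (j - 1) * (u (j - 1) - u j) + u j * f t j (u j)"

definition is_solution_E ::
  "(real \<Rightarrow> int \<Rightarrow> real) \<Rightarrow> (real \<Rightarrow> int \<Rightarrow> real \<Rightarrow> real) \<Rightarrow> real \<Rightarrow> (int \<Rightarrow> real)
    \<Rightarrow> (real \<Rightarrow> int \<Rightarrow> real) \<Rightarrow> bool"
  where "is_solution_E d f s u0 u \<longleftrightarrow>
     u s = u0 \<and>
     (\<forall>t1\<ge>s. \<exists>B. \<forall>t\<in>{s..t1}. \<forall>j. \<bar>u t j\<bar> \<le> B) \<and>
     (\<forall>j. \<forall>t\<ge>s. ((\<lambda>\<tau>. u \<tau> j) has_real_derivative E_rhs d f t (u t) j) (at t within {s..}))"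

definition l_inf_plus :: "(int \<Rightarrow> real) set"
  where "l_inf_plus = {v. (\<exists>B. \<forall>j. \<bar>v j\<bar> \<le> B) \<and> (\<forall>j. 0 \<le> v j)}"

end

theory Submission
  imports Defs
begin

lemma deriv_sign_left:
  fixes z :: "real \<Rightarrow> real"
  assumes der: "(z has_real_derivative D) (at \<tau> within {ta..})"
    and lt: "ta < \<tau>" and less: "\<And>t. ta \<le> t \<Longrightarrow> t < \<tau> \<Longrightarrow> z t < z \<tau>"
  shows "D \<ge> 0"
proof (rule ccontr)
  assume "\<not> D \<ge> 0"
  then have "D < 0" by simp
  from has_real_derivative_neg_dec_left[OF der this]
  obtain e where e: "e > 0" "\<And>h. h > 0 \<Longrightarrow> \<tau> - h \<in> {ta..} \<Longrightarrow> h < e \<Longrightarrow> z \<tau> < z (\<tau> - h)" by auto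
  define h where "h = min (e/2) (\<tau> - ta)"
  have "h > 0" "h < e" "\<tau> - h \<in> {ta..}" using e lt by (auto simp: h_def)
  then have "z \<tau> < z (\<tau> - h)" using e by auto
  moreover have "z (\<tau> - h) < z \<tau>" using less[of "\<tau> - h"] \<open>h > 0\<close> \<open>\<tau> - h \<in> {ta..}\<close> by auto
  ultimately show False by simp
qed

lemma g_step: "(1 + (real_of_int (j + 1))\<^sup>2) - (1 + (real_of_int j)\<^sup>2) \<le> 2 * (1 + (real_of_int j)\<^sup>2)"
  "(1 + (real_of_int (j - 1))\<^sup>2) - (1 + (real_of_int j)\<^sup>2) \<le> 2 * (1 + (real_of_int j)\<^sup>2)"
proof -
  have e: "(real_of_int (j+1))^2 = (real_of_int j)^2 + 2*real_of_int j + 1"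
    "(real_of_int (j-1))^2 = (real_of_int j)^2 - 2*real_of_int j + 1"
    by (simp_all add: power2_eq_square algebra_simps)
  have "0 \<le> (real_of_int j - 1)^2" "0 \<le> (real_of_int j + 1)^2" by simp_all
  then have h: "2*real_of_int j \<le> (real_of_int j)^2 + 1" "-2*real_of_int j \<le> (real_of_int j)^2 + 1"
    by (simp_all add: power2_diff power2_sum)
  have h0: "0 \<le> (real_of_int j)^2" by simp
  have "2*real_of_int j + 1 \<le> 2 + 2*(real_of_int j)^2" "1 - 2*real_of_int j \<le> 2 + 2*(real_of_int j)^2"
    using h h0 by linarith+
  then show "(1 + (real_of_int (j + 1))\<^sup>2) - (1 + (real_of_int j)\<^sup>2) \<le> 2 * (1 + (real_of_int j)\<^sup>2)"
    "(1 + (real_of_int (j - 1))\<^sup>2) - (1 + (real_of_int j)\<^sup>2) \<le> 2 * (1 + (real_of_int j)\<^sup>2)"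
    unfolding e by (simp_all add: algebra_simps)
qed

lemma comparison:
  fixes w w' a :: "real \<Rightarrow> int \<Rightarrow> real"
  assumes t01: "ta \<le> tb"
    and init: "\<And>j. w ta j \<le> 0"
    and bnd: "\<And>t j. t \<in> {ta..tb} \<Longrightarrow> w t j \<le> B"
    and der: "\<And>t j. t \<in> {ta..tb} \<Longrightarrow> ((\<lambda>\<tau>. w \<tau> j) has_real_derivative w' t j) (at t within {ta..})"
    and ineq: "\<And>t j. t \<in> {ta..tb} \<Longrightarrow> w t j > 0 \<Longrightarrow>
        w' t j \<le> a t (j+1) * (w t (j+1) - w t j) + a t (j-1) * (w t (j-1) - w t j) + Bb * w t j"
    and aa: "\<And>t j. t \<in> {ta..tb} \<Longrightarrow> 0 \<le> a t j \<and> a t j \<le> A"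
  shows "t \<in> {ta..tb} \<Longrightarrow> w t j \<le> 0"
proof -
  define g :: "int \<Rightarrow> real" where "g j = 1 + (real_of_int j)\<^sup>2" for j
  have gpos: "g j \<ge> 1" for j by (simp add: g_def)
  have gstep: "g (j+1) - g j \<le> 2 * g j" "g (j-1) - g j \<le> 2 * g j" for j
    using g_step[of j] by (simp_all add: g_def)
  have A0: "A \<ge> 0" using aa[of ta 0] t01 by auto
  define K where "K = 4 * A + \<bar>Bb\<bar> + 1"
  have main: "w t j \<le> \<epsilon> * exp (K * (t - ta)) * g j" if eps: "\<epsilon> > 0" and t: "t \<in> {ta..tb}" for \<epsilon> t j
  proof -
    define z where "z t j = w t j - \<epsilon> * exp (K * (t - ta)) * g j" for t j
    define F where "F = {j. \<epsilon> * g j \<le> \<bar>B\<bar>}"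
    have Fsub: "F \<subseteq> {- \<lceil>\<bar>B\<bar>/\<epsilon>\<rceil> .. \<lceil>\<bar>B\<bar>/\<epsilon>\<rceil>}"
    proof
      fix j assume "j \<in> F"
      then have "\<epsilon> * (1 + (real_of_int j)\<^sup>2) \<le> \<bar>B\<bar>" by (simp add: F_def g_def)
      moreover have "\<bar>real_of_int j\<bar> \<le> 1 + (real_of_int j)\<^sup>2"
      proof -
        have "0 \<le> (real_of_int j - 1)^2" "0 \<le> (real_of_int j + 1)^2" by simp_all
        then have h: "2*real_of_int j \<le> (real_of_int j)^2 + 1" "-2*real_of_int j \<le> (real_of_int j)^2 + 1"
          by (simp_all add: power2_diff power2_sum)
        have "0 \<le> (real_of_int j)^2" by simp
        then show ?thesis using h by (simp add: abs_le_iff)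
      qed
      ultimately have "\<epsilon> * \<bar>real_of_int j\<bar> \<le> \<bar>B\<bar>" using eps
        by (meson dual_order.trans less_le mult_left_mono)
      then have "\<bar>real_of_int j\<bar> \<le> \<bar>B\<bar> / \<epsilon>" using eps by (simp add: field_simps)
      then have "\<bar>real_of_int j\<bar> \<le> real_of_int \<lceil>\<bar>B\<bar>/\<epsilon>\<rceil>" by linarith
      then show "j \<in> {- \<lceil>\<bar>B\<bar>/\<epsilon>\<rceil> .. \<lceil>\<bar>B\<bar>/\<epsilon>\<rceil>}" by auto
    qed
    have finF: "finite F" using Fsub finite_subset by blast
    have expge: "exp (K * (t - ta)) \<ge> 1" if "t \<ge> ta" for t
      using that A0 by (simp add: K_def)
    have zneg_out: "z t j < 0" if "t \<in> {ta..tb}" "j \<notin> F" for t j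
    proof -
      have "\<epsilon> * g j \<le> \<epsilon> * exp (K * (t - ta)) * g j"
        using expge[of t] that eps gpos[of j] by (simp add: mult_right_mono mult_left_mono)
      moreover have "\<epsilon> * g j > \<bar>B\<bar>" using that by (auto simp: F_def)
      ultimately show ?thesis using bnd[OF that(1), of j] by (simp add: z_def)
    qed
    have zcont: "continuous_on {ta..tb} (\<lambda>t. z t j)" for j
    proof -
      have "continuous_on {ta..tb} (\<lambda>t. w t j)"
        unfolding continuous_on_eq_continuous_within
      proof
        fix t assume "t \<in> {ta..tb}"
        then have "continuous (at t within {ta..}) (\<lambda>t. w t j)" using der DERIV_continuous by blast
        then show "continuous (at t within {ta..tb}) (\<lambda>t. w t j)"
          by (rule continuous_within_subset) auto
      qed
      then show ?thesis unfolding z_def by (intro continuous_intros)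
    qed
    have zder: "((\<lambda>t. z t j) has_real_derivative (w' t j - \<epsilon> * (K * exp (K * (t - ta))) * g j)) (at t within {ta..})"
      if "t \<in> {ta..tb}" for t j
      unfolding z_def using der[OF that, of j]
      by (auto intro!: derivative_eq_intros)
    show ?thesis
    proof (rule ccontr)
      assume "\<not> ?thesis"
      then have zt: "z t j > 0" by (simp add: z_def)
      define S where "S = (\<Union>j\<in>F. {s \<in> {ta..tb}. 0 \<le> z s j})"
      have jF: "j \<in> F" using zneg_out[OF t] zt by force
      have "t \<in> S" using jF t zt unfolding S_def by (auto intro!: bexI[of _ j])
      have clS: "closed S" unfolding S_def
        using finF by (intro closed_UN ballI continuous_on_closed_Collect_le zcont continuous_on_const) auto
      have bdS: "bdd_below S" unfolding S_def by (rule bdd_belowI[of _ ta]) auto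
      define \<tau> where "\<tau> = Inf S"
      have "\<tau> \<in> S" unfolding \<tau>_def using closed_contains_Inf[OF _ bdS clS] \<open>t \<in> S\<close> by auto
      then obtain j0 where j0: "j0 \<in> F" "\<tau> \<in> {ta..tb}" "0 \<le> z \<tau> j0" by (auto simp: S_def)
      have minS: "s \<ge> \<tau>" if "s \<in> S" for s unfolding \<tau>_def using bdS that by (simp add: cInf_lower)
      have zt0: "z ta j < 0" for j
      proof -
        have "\<epsilon> * g j > 0" using eps gpos[of j] by simp
        then show ?thesis using init[of j] by (simp add: z_def)
      qed
      have notS: "z s j < 0" if "s \<in> {ta..tb}" "s < \<tau>" for s j
      proof (cases "j \<in> F")
        case True
        then show ?thesis using minS[of s] that by (force simp: S_def)
      next
        case False then show ?thesis using zneg_out that by auto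
      qed
      have tau_gt: "\<tau> > ta"
      proof (rule ccontr)
        assume "\<not> \<tau> > ta" then have "\<tau> = ta" using j0 by auto
        then show False using zt0[of j0] j0 by simp
      qed
      have zle: "z \<tau> j \<le> 0" for j
      proof (rule ccontr)
        assume "\<not> z \<tau> j \<le> 0"
        then have "z ta j \<le> 0" "0 \<le> z \<tau> j" using zt0[of j] by auto
        moreover have "continuous_on {ta..\<tau>} (\<lambda>t. z t j)"
          using continuous_on_subset[OF zcont[of j], of "{ta..\<tau>}"] j0 by auto
        ultimately obtain x where x: "ta \<le> x" "x \<le> \<tau>" "z x j = 0"
          using IVT'[of "\<lambda>t. z t j" ta 0 \<tau>] tau_gt by auto
        have "x \<noteq> \<tau>" using x \<open>\<not> z \<tau> j \<le> 0\<close> by auto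
        then show False using notS[of x j] x j0 by auto
      qed
      have z0: "z \<tau> j0 = 0" using zle[of j0] j0 by simp
      define E where "E = exp (K * (\<tau> - ta))"
      have Epos: "E > 0" by (simp add: E_def)
      have wj0: "w \<tau> j0 = \<epsilon> * E * g j0" using z0 by (simp add: z_def E_def)
      have wpos: "w \<tau> j0 > 0" using wj0 eps Epos gpos[of j0] by simp
      have wle: "w \<tau> j \<le> \<epsilon> * E * g j" for j using zle[of j] by (simp add: z_def E_def)
      have D0: "w' \<tau> j0 - \<epsilon> * (K * E) * g j0 \<ge> 0"
        using deriv_sign_left[OF zder[OF j0(2), of j0] tau_gt] notS[of _ j0] j0 z0
        by (auto simp: E_def)
      have eEg: "\<epsilon> * E > 0" using eps Epos by simp
      have tb: "a \<tau> (j0+1) * (w \<tau> (j0+1) - w \<tau> j0) \<le> A * (\<epsilon> * E * (2 * g j0))"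
      proof -
        have "w \<tau> (j0+1) - w \<tau> j0 \<le> \<epsilon> * E * (g (j0+1) - g j0)"
          using wle[of "j0+1"] wj0 by (simp add: algebra_simps)
        also have "\<dots> \<le> \<epsilon> * E * (2 * g j0)" using gstep[of j0] eEg by (intro mult_left_mono) auto
        finally have "a \<tau> (j0+1) * (w \<tau> (j0+1) - w \<tau> j0) \<le> a \<tau> (j0+1) * (\<epsilon> * E * (2 * g j0))"
          using aa[OF j0(2)] by (intro mult_left_mono) auto
        also have "\<dots> \<le> A * (\<epsilon> * E * (2 * g j0))"
          using aa[OF j0(2), of "j0+1"] eEg gpos[of j0] by (intro mult_right_mono) auto
        finally show ?thesis .
      qed
      have t2: "a \<tau> (j0-1) * (w \<tau> (j0-1) - w \<tau> j0) \<le> A * (\<epsilon> * E * (2 * g j0))"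
      proof -
        have "w \<tau> (j0-1) - w \<tau> j0 \<le> \<epsilon> * E * (g (j0-1) - g j0)"
          using wle[of "j0-1"] wj0 by (simp add: algebra_simps)
        also have "\<dots> \<le> \<epsilon> * E * (2 * g j0)" using gstep[of j0] eEg by (intro mult_left_mono) auto
        finally have "a \<tau> (j0-1) * (w \<tau> (j0-1) - w \<tau> j0) \<le> a \<tau> (j0-1) * (\<epsilon> * E * (2 * g j0))"
          using aa[OF j0(2)] by (intro mult_left_mono) auto
        also have "\<dots> \<le> A * (\<epsilon> * E * (2 * g j0))"
          using aa[OF j0(2), of "j0-1"] eEg gpos[of j0] by (intro mult_right_mono) auto
        finally show ?thesis .
      qed
      have t3: "Bb * w \<tau> j0 \<le> \<bar>Bb\<bar> * (\<epsilon> * E * g j0)"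
        using wj0 wpos by (simp add: mult_right_mono)
      have "w' \<tau> j0 \<le> (4 * A + \<bar>Bb\<bar>) * (\<epsilon> * E * g j0)"
        using ineq[OF j0(2) wpos] tb t2 t3 by (simp add: algebra_simps)
      moreover have "\<epsilon> * E * g j0 > 0" using eEg gpos[of j0] by simp
      moreover have "K * (\<epsilon> * E * g j0) = (4 * A + \<bar>Bb\<bar>) * (\<epsilon> * E * g j0) + \<epsilon> * E * g j0"
        unfolding K_def by (simp add: algebra_simps)
      ultimately have "w' \<tau> j0 < K * (\<epsilon> * E * g j0)" by linarith
      then show False using D0 by (simp add: algebra_simps)
    qed
  qed
  assume t: "t \<in> {ta..tb}"
  show "w t j \<le> 0"
  proof (rule ccontr)
    assume "\<not> w t j \<le> 0"
    define C where "C = exp (K * (t - ta)) * g j"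
    have Cpos: "C > 0" using gpos[of j] by (simp add: C_def)
    define \<epsilon> where "\<epsilon> = w t j / (2 * C)"
    have "\<epsilon> > 0" using \<open>\<not> w t j \<le> 0\<close> Cpos by (simp add: \<epsilon>_def)
    from main[OF this t] have "w t j \<le> \<epsilon> * C" by (simp add: C_def mult.assoc)
    also have "\<epsilon> * C = w t j / 2" using Cpos by (simp add: \<epsilon>_def)
    finally show False using \<open>\<not> w t j \<le> 0\<close> by simp
  qed
qed


lemma per_shift_nat:
  fixes h :: "'a::ring_1 \<Rightarrow> 'b"
  assumes "\<And>x. h (x + p) = h x"
  shows "h (x + of_nat n * p) = h x"
proof (induction n)
  case (Suc n)
  have "h (x + of_nat (Suc n) * p) = h ((x + of_nat n * p) + p)" by (simp add: algebra_simps)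
  then show ?case using assms Suc by simp
qed simp

lemma per_shift:
  fixes h :: "'a::ring_1 \<Rightarrow> 'b"
  assumes "\<And>x. h (x + p) = h x"
  shows "h (x + of_int k * p) = h x"
proof (cases "k \<ge> 0")
  case True
  then obtain n where "k = int n" by (metis nonneg_eq_int)
  then show ?thesis using per_shift_nat[of h p, OF assms] by simp
next
  case False
  then obtain n where k: "k = - int n" by (metis linorder_not_le neg_int_cases less_le)
  have "h (x + of_int k * p) = h ((x + of_int k * p) + of_nat n * p)" using per_shift_nat[of h p, OF assms] by simp
  also have "\<dots> = h x" using k by simp
  finally show ?thesis .
qed

lemma floor_rep: fixes t T :: real assumes T: "T > 0"
  shows "t - of_int \<lfloor>t/T\<rfloor> * T \<ge> 0" "t - of_int \<lfloor>t/T\<rfloor> * T \<le> T"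
proof -
  have "of_int \<lfloor>t/T\<rfloor> \<le> t/T" "t/T < of_int \<lfloor>t/T\<rfloor> + 1" by linarith+
  then have "of_int \<lfloor>t/T\<rfloor> * T \<le> t" "t < (of_int \<lfloor>t/T\<rfloor> + 1) * T"
    using T by (metis pos_le_divide_eq, metis pos_divide_less_eq)
  then show "t - of_int \<lfloor>t/T\<rfloor> * T \<ge> 0" "t - of_int \<lfloor>t/T\<rfloor> * T \<le> T"
    by (simp_all add: algebra_simps)
qed

lemma per_reduce:
  fixes g :: "real \<Rightarrow> int \<Rightarrow> 'b"
  assumes T: "T > 0" and J: "J > 0"
    and pt: "\<And>t j. g (t + T) j = g t j" and pj: "\<And>t j. g t (j + int J) = g t j"
  shows "\<exists>t' j'. t' \<in> {0..T} \<and> j' \<in> {0..<int J} \<and> g t j = g t' j'"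
proof -
  define t' where "t' = t - of_int \<lfloor>t/T\<rfloor> * T"
  define j' where "j' = j mod int J"
  have "t' \<ge> 0" using floor_rep[OF T, of t] unfolding t'_def by simp
  moreover have "t' \<le> T" using floor_rep[OF T, of t] unfolding t'_def by simp
  moreover have "j' \<in> {0..<int J}" using J by (simp add: j'_def)
  moreover have "g t j = g t' j'"
  proof -
    have "g t j = g (t' + of_int \<lfloor>t/T\<rfloor> * T) j" by (simp add: t'_def)
    also have "\<dots> = g t' j" using per_shift[of "\<lambda>t. g t j" T t' "\<lfloor>t/T\<rfloor>"] pt by simp
    also have "j = j' + of_int (j div int J) * int J" by (simp add: j'_def)
    then have "g t' j = g t' (j' + of_int (j div int J) * int J)" by simp
    also have "\<dots> = g t' j'" using per_shift[of "g t'" "int J" j' "j div int J"] pj by simp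
    finally show ?thesis .
  qed
  ultimately show ?thesis by (intro exI[of _ t'] exI[of _ j']) auto
qed

lemma per_bounded:
  fixes g :: "real \<Rightarrow> int \<Rightarrow> real"
  assumes T: "T > 0" and J: "J > 0"
    and pt: "\<And>t j. g (t + T) j = g t j" and pj: "\<And>t j. g t (j + int J) = g t j"
    and cont: "\<And>j. continuous_on UNIV (\<lambda>t. g t j)"
  shows "\<exists>Q. \<forall>t j. \<bar>g t j\<bar> \<le> Q"
proof -
  have "\<forall>j\<in>{0..<int J}. \<exists>Q. \<forall>t\<in>{0..T}. \<bar>g t j\<bar> \<le> Q"
  proof
    fix j
    have "compact ((\<lambda>t. g t j) ` {0..T})"
      by (rule compact_continuous_image) (auto intro: continuous_on_subset[OF cont])
    then have "bounded ((\<lambda>t. g t j) ` {0..T})" by (rule compact_imp_bounded)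
    then obtain Q where "\<forall>x\<in>(\<lambda>t. g t j) ` {0..T}. norm x \<le> Q" by (auto simp: bounded_iff)
    then show "\<exists>Q. \<forall>t\<in>{0..T}. \<bar>g t j\<bar> \<le> Q" by auto
  qed
  from finite_set_choice[OF _ this] obtain Qf where Qf: "\<forall>j\<in>{0..<int J}. \<forall>t\<in>{0..T}. \<bar>g t j\<bar> \<le> Qf j"
    by auto
  have Q0: "\<forall>j\<in>{0..<int J}. 0 \<le> Qf j" using Qf T by (meson abs_ge_zero atLeastAtMost_iff less_le_not_le order_trans order_refl)
  show ?thesis
  proof (intro exI allI)
    fix t j
    obtain t' j' where tj: "t' \<in> {0..T}" "j' \<in> {0..<int J}" "g t j = g t' j'"
      using per_reduce[of T J g, OF T J pt pj] by blast
    have "\<bar>g t j\<bar> \<le> Qf j'" using Qf tj by auto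
    also have "\<dots> \<le> (\<Sum>i\<in>{0..<int J}. Qf i)"
      using Q0 tj by (intro member_le_sum) auto
    finally show "\<bar>g t j\<bar> \<le> (\<Sum>i\<in>{0..<int J}. Qf i)" .
  qed
qed

lemma per_pos_lower:
  fixes g :: "real \<Rightarrow> int \<Rightarrow> real"
  assumes T: "T > 0" and J: "J > 0"
    and pt: "\<And>t j. g (t + T) j = g t j" and pj: "\<And>t j. g t (j + int J) = g t j"
    and cont: "\<And>j. continuous_on UNIV (\<lambda>t. g t j)"
    and pos: "\<And>t j. g t j > 0"
  shows "\<exists>P>0. \<forall>t j. P \<le> g t j"
proof -
  have "\<forall>j\<in>{0..<int J}. \<exists>P. P > 0 \<and> (\<forall>t\<in>{0..T}. P \<le> g t j)"
  proof
    fix j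
    obtain x where "x \<in> {0..T}" "\<forall>y\<in>{0..T}. g x j \<le> g y j"
      using continuous_attains_inf[of "{0..T}" "\<lambda>t. g t j"] T
        continuous_on_subset[OF cont, of "{0..T}" j] by auto
    then show "\<exists>P. P > 0 \<and> (\<forall>t\<in>{0..T}. P \<le> g t j)" using pos by blast
  qed
  from finite_set_choice[OF _ this] obtain Pf where Pf: "\<forall>j\<in>{0..<int J}. Pf j > 0 \<and> (\<forall>t\<in>{0..T}. Pf j \<le> g t j)"
    by auto
  define P where "P = Min (Pf ` {0..<int J})"
  have ne: "{0..<int J} \<noteq> {}" using J by auto
  have "P > 0" unfolding P_def using Pf ne by (subst Min_gr_iff) auto
  moreover have "\<forall>t j. P \<le> g t j"
  proof (intro allI)
    fix t j
    obtain t' j' where tj: "t' \<in> {0..T}" "j' \<in> {0..<int J}" "g t j = g t' j'"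
      using per_reduce[of T J g, OF T J pt pj] by blast
    have "P \<le> Pf j'" unfolding P_def using tj by (intro Min_le) auto
    also have "\<dots> \<le> g t j" using Pf tj by auto
    finally show "P \<le> g t j" .
  qed
  ultimately show ?thesis by blast
qed


theorem proposition3p4:
  fixes d :: "real \<Rightarrow> int \<Rightarrow> real"
    and f :: "real \<Rightarrow> int \<Rightarrow> real \<Rightarrow> real"
    and fu :: "real \<Rightarrow> int \<Rightarrow> real \<Rightarrow> real"
    and T :: real and J :: nat and M0 :: real
    and lam :: "real \<Rightarrow> real"
    and psi :: "real \<Rightarrow> real \<Rightarrow> int \<Rightarrow> real"
    and \<mu>s cs c \<mu> \<mu>' :: real
  assumes T_pos: "T > 0" and J_pos: "J > 0"
    and d_bdd: "\<exists>B. \<forall>t j. \<bar>d t j\<bar> \<le> B"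
    and d_inf_pos: "\<exists>m>0. \<forall>t j. d t j \<ge> m"
    and d_per: "\<And>t j. d (t + T) j = d t j" "\<And>t j. d t (j + int J) = d t j"
    and f_per: "\<And>t j u. f (t + T) j u = f t j u" "\<And>t j u. f t (j + int J) u = f t j u"
    and H0_hoelder: "\<And>K. \<exists>\<alpha> C. 0 < \<alpha> \<and> \<alpha> \<le> 1 \<and>
         (\<forall>t s j u. \<bar>u\<bar> \<le> K \<longrightarrow> \<bar>t - s\<bar> \<le> 1 \<longrightarrow> \<bar>f t j u - f s j u\<bar> \<le> C * \<bar>t - s\<bar> powr \<alpha>)"
    and H0_lip: "\<And>K. \<exists>L. \<forall>t j u v. \<bar>u\<bar> \<le> K \<longrightarrow> \<bar>v\<bar> \<le> K \<longrightarrow> \<bar>f t j u - f t j v\<bar> \<le> L * \<bar>u - v\<bar>"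
    and H0_C1: "\<And>t j u. u \<ge> 0 \<Longrightarrow> ((\<lambda>v. f t j v) has_real_derivative fu t j u) (at u within {0..})"
    and H0_C1_cont: "\<And>t j. continuous_on {0..} (fu t j)"
    and H0_neg: "\<And>t j u. u \<le> 0 \<Longrightarrow> f t j u = f t j 0"
    and H0_M0: "\<And>t j u. u \<ge> M0 \<Longrightarrow> f t j u < 0"
    and H0_fu: "\<And>t j u. u \<ge> 0 \<Longrightarrow> fu t j u < 0"
    and H0_liminf: "\<exists>a>0. \<exists>L. \<forall>s t. t - s \<ge> L \<longrightarrow>
         integral {s..t} (\<lambda>\<tau>. INF j. f \<tau> j 0) \<ge> a * (t - s)"
    and psi_pos: "\<And>m t j. psi m t j > 0"
    and psi_per: "\<And>m t j. psi m (t + T) j = psi m t j" "\<And>m t j. psi m t (j + int J) = psi m t j"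
    and psi_norm: "\<And>m. (SUP j. psi m 0 j) = 1"
    and psi_eig: "\<And>m t j. ((\<lambda>\<tau>. exp (lam m * \<tau>) * psi m \<tau> j) has_real_derivative
         (d t (j - 1) * (exp m * (exp (lam m * t) * psi m t (j - 1)) - exp (lam m * t) * psi m t j)
          + d t (j + 1) * (exp (- m) * (exp (lam m * t) * psi m t (j + 1)) - exp (lam m * t) * psi m t j)
          + f t j 0 * (exp (lam m * t) * psi m t j))) (at t)"
    and mus_pos: "\<mu>s > 0"
    and mus_min: "\<And>m. m > 0 \<Longrightarrow> lam \<mu>s / \<mu>s \<le> lam m / m"
    and cs_def: "cs = lam \<mu>s / \<mu>s"
    and c_gt: "c > cs"
    and mu_bounds: "0 < \<mu>" "\<mu> < \<mu>'" "\<mu>' < min (2 * \<mu>) \<mu>s"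
    and c_eq: "c = lam \<mu> / \<mu>"
    and ratios: "lam \<mu> / \<mu> > lam \<mu>' / \<mu>'" "lam \<mu>' / \<mu>' > cs"
  shows "\<forall>\<delta> t0. 0 < \<delta> \<and> \<delta> \<le> 2 \<longrightarrow>
    (\<exists>K. \<forall>d1 u0 u. d1 / \<delta> \<ge> K \<longrightarrow> u0 \<in> l_inf_plus \<longrightarrow> is_solution_E d f t0 u0 u \<longrightarrow>
      ((\<forall>j. u0 j \<le> \<delta> * (exp (- \<mu> * (j - c * t0)) * psi \<mu> t0 j)
                   + d1 * (exp (- \<mu>' * (j - c * t0)) * psi \<mu>' t0 j)) \<longrightarrow>
        (\<forall>t\<ge>t0. \<forall>j. u t j \<le> \<delta> * (exp (- \<mu> * (j - c * t)) * psi \<mu> t j)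
                   + d1 * (exp (- \<mu>' * (j - c * t)) * psi \<mu>' t j)))
      \<and> ((\<forall>j. u0 j \<ge> \<delta> * (exp (- \<mu> * (j - c * t0)) * psi \<mu> t0 j)
                   - d1 * (exp (- \<mu>' * (j - c * t0)) * psi \<mu>' t0 j)) \<longrightarrow>
        (\<forall>t\<ge>t0. \<forall>j. u t j \<ge> \<delta> * (exp (- \<mu> * (j - c * t)) * psi \<mu> t j)
                   - d1 * (exp (- \<mu>' * (j - c * t)) * psi \<mu>' t j))))"
proof -
  obtain Bd where Bd: "\<And>t j. \<bar>d t j\<bar> \<le> Bd" using d_bdd by auto
  obtain md where md: "md > 0" "\<And>t j. d t j \<ge> md" using d_inf_pos by auto
  have dA: "0 \<le> d t j \<and> d t j \<le> Bd" for t j using Bd[of t j] md(2)[of t j] md(1) by auto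
  define phi where "phi m t j = exp (- m * (real_of_int j - c * t)) * psi m t j" for m t j
  have phipos: "phi m t j > 0" for m t j using psi_pos by (simp add: phi_def)
  have phi_der: "((\<lambda>\<tau>. phi m \<tau> j) has_real_derivative ((m*c - lam m) * phi m t j
      + d t (j-1) * (phi m t (j-1) - phi m t j) + d t (j+1) * (phi m t (j+1) - phi m t j)
      + f t j 0 * phi m t j)) (at t)" for m t j
  proof -
    define k where "k = m*c - lam m"
    define E where "E \<tau> i = exp (lam m * \<tau>) * psi m \<tau> i" for \<tau> i
    have eq: "phi m \<tau> i = exp (- m * real_of_int i) * (exp (k*\<tau>) * E \<tau> i)" for \<tau> i
    proof -
      have "exp (- m * (real_of_int i - c * \<tau>)) = exp (- m * real_of_int i) * exp (k*\<tau>) * exp (lam m * \<tau>)"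
        by (simp only: mult_exp_exp) (rule arg_cong[of _ _ exp], simp add: k_def algebra_simps)
      then show ?thesis by (simp add: phi_def E_def mult.assoc)
    qed
    have sh: "exp (- m * real_of_int (j - 1)) = exp (- m * real_of_int j) * exp m"
      "exp (- m * real_of_int (j + 1)) = exp (- m * real_of_int j) * exp (- m)"
      by (simp_all only: mult_exp_exp) (rule arg_cong[of _ _ exp], simp add: algebra_simps)+
    define Ej' where "Ej' = d t (j - 1) * (exp m * E t (j - 1) - E t j)
          + d t (j + 1) * (exp (- m) * E t (j + 1) - E t j) + f t j 0 * E t j"
    have dE: "((\<lambda>\<tau>. E \<tau> j) has_real_derivative Ej') (at t)"
      unfolding E_def Ej'_def using psi_eig[where m=m and t=t and j=j] by simp
    have dk: "((\<lambda>\<tau>. exp (k*\<tau>)) has_real_derivative exp (k*t) * k) (at t)"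
      by (auto intro!: derivative_eq_intros)
    have d3: "((\<lambda>\<tau>. exp (- m * real_of_int j) * (exp (k*\<tau>) * E \<tau> j)) has_real_derivative
        exp (- m * real_of_int j) * (exp (k*t) * k * E t j + Ej' * exp (k*t))) (at t)"
      by (rule DERIV_cmult[OF DERIV_mult[OF dk dE]])
    have fe: "(\<lambda>\<tau>. phi m \<tau> j) = (\<lambda>\<tau>. exp (- m * real_of_int j) * (exp (k*\<tau>) * E \<tau> j))"
      using eq by auto
    have ve: "(m*c - lam m) * phi m t j
      + d t (j-1) * (phi m t (j-1) - phi m t j) + d t (j+1) * (phi m t (j+1) - phi m t j)
      + f t j 0 * phi m t j = exp (- m * real_of_int j) * (exp (k*t) * k * E t j + Ej' * exp (k*t))"
      unfolding eq sh k_def[symmetric] Ej'_def by (simp add: algebra_simps)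
    show ?thesis using d3 unfolding fe ve .
  qed

  have psi_cont: "continuous_on UNIV (\<lambda>t. psi m t j)" for m j
  proof -
    have "isCont (\<lambda>\<tau>. exp (- (lam m * \<tau>)) * (exp (lam m * \<tau>) * psi m \<tau> j)) t" for t
      using isCont_mult[OF _ DERIV_isCont[OF psi_eig[where m=m and t=t and j=j]], of "\<lambda>\<tau>. exp (- (lam m * \<tau>))"]
      by (auto intro!: continuous_intros)
    moreover have "(\<lambda>\<tau>. exp (- (lam m * \<tau>)) * (exp (lam m * \<tau>) * psi m \<tau> j)) = (\<lambda>\<tau>. psi m \<tau> j)"
      by (auto simp: exp_minus field_simps)
    ultimately show ?thesis by (metis continuous_at_imp_continuous_on)
  qed
  have "\<exists>Q. \<forall>t j. \<bar>psi \<mu> t j\<bar> \<le> Q"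
    by (rule per_bounded[OF T_pos J_pos]) (auto simp: psi_per psi_cont)
  then obtain Q where Q: "\<And>t j. psi \<mu> t j \<le> Q" by (meson abs_ge_self order_trans)
  have Qpos: "Q > 0" using Q[of 0 0] psi_pos[of \<mu> 0 0] by linarith
  have "\<exists>P>0. \<forall>t j. P \<le> psi \<mu>' t j"
    by (rule per_pos_lower[OF T_pos J_pos]) (auto simp: psi_per psi_cont psi_pos)
  then obtain P1 where P1: "P1 > 0" "\<And>t j. P1 \<le> psi \<mu>' t j" by auto
  obtain \<alpha> C where hol: "0 < \<alpha>" "\<forall>t s j u. \<bar>u\<bar> \<le> 0 \<longrightarrow> \<bar>t - s\<bar> \<le> 1 \<longrightarrow> \<bar>f t j u - f s j u\<bar> \<le> C * \<bar>t - s\<bar> powr \<alpha>"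
    using H0_hoelder[of 0] by blast
  have f0cont: "continuous_on UNIV (\<lambda>t. f t j 0)" for j
  proof -
    have "isCont (\<lambda>s. f s j 0) t" for t
    proof -
      have "((\<lambda>s. s - t) \<longlongrightarrow> 0) (at t)" using LIM_zero[OF tendsto_ident_at] .
      then have l1: "((\<lambda>s. \<bar>s - t\<bar>) \<longlongrightarrow> 0) (at t)" by (rule tendsto_rabs_zero)
      have l2: "((\<lambda>s. \<bar>s - t\<bar> powr \<alpha>) \<longlongrightarrow> 0) (at t)"
        by (rule tendsto_zero_powrI[OF l1 tendsto_const]) (auto simp: hol(1))
      have l3: "((\<lambda>s. C * \<bar>s - t\<bar> powr \<alpha>) \<longlongrightarrow> 0) (at t)"
        using tendsto_mult[OF tendsto_const l2, of C] by simp
      have ev: "eventually (\<lambda>s. norm (f s j 0 - f t j 0) \<le> C * \<bar>s - t\<bar> powr \<alpha>) (at t)"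
        unfolding eventually_at using hol(2) by (intro exI[of _ 1]) (auto simp: dist_real_def)
      have "((\<lambda>s. f s j 0 - f t j 0) \<longlongrightarrow> 0) (at t)" by (rule Lim_null_comparison[OF ev l3])
      then show ?thesis unfolding isCont_def by (rule LIM_zero_cancel)
    qed
    then show ?thesis by (simp add: continuous_at_imp_continuous_on)
  qed
  have "\<exists>Q. \<forall>t j. \<bar>f t j 0\<bar> \<le> Q"
    by (rule per_bounded[OF T_pos J_pos, of "\<lambda>t j. f t j 0"]) (auto simp: f_per f0cont)
  then obtain F0 where F0: "\<And>t j. \<bar>f t j 0\<bar> \<le> F0" by auto
  have fbound: "\<exists>F. \<forall>t j u. \<bar>u\<bar> \<le> Kb \<longrightarrow> \<bar>f t j u\<bar> \<le> F" for Kb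
  proof -
    obtain L where L: "\<forall>t j u v. \<bar>u\<bar> \<le> \<bar>Kb\<bar> \<longrightarrow> \<bar>v\<bar> \<le> \<bar>Kb\<bar> \<longrightarrow> \<bar>f t j u - f t j v\<bar> \<le> L * \<bar>u - v\<bar>"
      using H0_lip by blast
    show ?thesis
    proof (intro exI allI impI)
      fix t j u assume u: "\<bar>u\<bar> \<le> Kb"
      have "\<bar>f t j u - f t j 0\<bar> \<le> L * \<bar>u\<bar>" using spec[OF spec[OF spec[OF spec[OF L, of t], of j], of u], of 0] u by simp
      also have "L * \<bar>u\<bar> \<le> \<bar>L\<bar> * \<bar>u\<bar>" by (simp add: mult_right_mono)
      also have "\<bar>L\<bar> * \<bar>u\<bar> \<le> \<bar>L\<bar> * \<bar>Kb\<bar>" using u by (simp add: mult_left_mono)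
      finally show "\<bar>f t j u\<bar> \<le> F0 + \<bar>L\<bar> * \<bar>Kb\<bar>" using F0[of t j] by linarith
    qed
  qed
  have fmono: "f t j v \<le> f t j u" if uv: "0 \<le> u" "u \<le> v" for t j u v
  proof -
    have cont: "continuous_on {u..v} (f t j)"
      unfolding continuous_on_eq_continuous_within
    proof
      fix x assume x: "x \<in> {u..v}"
      then have "continuous (at x within {0..}) (f t j)"
        using DERIV_continuous[OF H0_C1[where u=x and t=t and j=j]] uv by auto
      then show "continuous (at x within {u..v}) (f t j)"
        by (rule continuous_within_subset) (use uv in auto)
    qed
    show ?thesis
    proof (rule DERIV_nonpos_imp_decreasing_open[OF uv(2) _ cont])
      fix x assume x: "u < x" "x < v"
      then have "x \<in> interior {0..}" using uv by auto
      then have "(f t j has_real_derivative fu t j x) (at x)"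
        using H0_C1[where u=x and t=t and j=j] x uv at_within_interior[of x "{0..}"] by auto
      then show "\<exists>y. (f t j has_real_derivative y) (at x) \<and> y \<le> 0"
        using H0_fu[where u=x and t=t and j=j] x uv by (intro exI[of _ "fu t j x"]) auto
    qed
  qed
  have kmu: "\<mu>*c - lam \<mu> = 0" using c_eq mu_bounds(1) by (simp add: field_simps)
  define \<kappa> where "\<kappa> = \<mu>'*c - lam \<mu>'"
  have mu'pos: "\<mu>' > 0" using mu_bounds by linarith
  have "lam \<mu>' / \<mu>' < c" using c_eq ratios(1) by simp
  then have kpos: "\<kappa> > 0" using mu'pos by (simp add: \<kappa>_def pos_divide_less_eq mult.commute)
  define Dphi where "Dphi m t j = (m*c - lam m) * phi m t j
      + d t (j-1) * (phi m t (j-1) - phi m t j) + d t (j+1) * (phi m t (j+1) - phi m t j)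
      + f t j 0 * phi m t j" for m t j
  have phi_der': "((\<lambda>\<tau>. phi m \<tau> j) has_real_derivative Dphi m t j) (at t within S)" for m t j S
    unfolding Dphi_def by (rule has_field_derivative_at_within[OF phi_der])

  show ?thesis
  proof (intro allI impI)
    fix \<delta> t0 :: real assume \<delta>: "0 < \<delta> \<and> \<delta> \<le> 2"
    obtain LV0 where LV0: "\<forall>t j u v. \<bar>u\<bar> \<le> 2*Q \<longrightarrow> \<bar>v\<bar> \<le> 2*Q \<longrightarrow> \<bar>f t j u - f t j v\<bar> \<le> LV0 * \<bar>u - v\<bar>"
      using H0_lip by blast
    define LV where "LV = max 0 LV0"
    have LV: "\<bar>f t j u - f t j v\<bar> \<le> LV * \<bar>u - v\<bar>" if "\<bar>u\<bar> \<le> 2*Q" "\<bar>v\<bar> \<le> 2*Q" for t j u v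
    proof -
      have "LV0 * \<bar>u - v\<bar> \<le> LV * \<bar>u - v\<bar>" unfolding LV_def by (intro mult_right_mono) auto
      moreover have "\<bar>f t j u - f t j v\<bar> \<le> LV0 * \<bar>u - v\<bar>"
        using spec[OF spec[OF spec[OF spec[OF LV0, of t], of j], of u], of v] that by simp
      ultimately show ?thesis by linarith
    qed
    have LV0': "LV \<ge> 0" by (simp add: LV_def)
    define Kc where "Kc = max (Q / P1) (2 * LV * Q^2 / (\<kappa> * P1))"
    show "\<exists>K. \<forall>d1 u0 u. d1 / \<delta> \<ge> K \<longrightarrow> u0 \<in> l_inf_plus \<longrightarrow> is_solution_E d f t0 u0 u \<longrightarrow>
      ((\<forall>j. u0 j \<le> \<delta> * (exp (- \<mu> * (j - c * t0)) * psi \<mu> t0 j)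
                   + d1 * (exp (- \<mu>' * (j - c * t0)) * psi \<mu>' t0 j)) \<longrightarrow>
        (\<forall>t\<ge>t0. \<forall>j. u t j \<le> \<delta> * (exp (- \<mu> * (j - c * t)) * psi \<mu> t j)
                   + d1 * (exp (- \<mu>' * (j - c * t)) * psi \<mu>' t j)))
      \<and> ((\<forall>j. u0 j \<ge> \<delta> * (exp (- \<mu> * (j - c * t0)) * psi \<mu> t0 j)
                   - d1 * (exp (- \<mu>' * (j - c * t0)) * psi \<mu>' t0 j)) \<longrightarrow>
        (\<forall>t\<ge>t0. \<forall>j. u t j \<ge> \<delta> * (exp (- \<mu> * (j - c * t)) * psi \<mu> t j)
                   - d1 * (exp (- \<mu>' * (j - c * t)) * psi \<mu>' t j)))"
    proof (rule exI[of _ Kc], intro allI impI, rule conjI)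
      fix d1 u0 u
      assume dK: "d1 / \<delta> \<ge> Kc" and u0l: "u0 \<in> l_inf_plus" and sol: "is_solution_E d f t0 u0 u"
      have d1K: "d1 \<ge> \<delta> * Kc" using dK \<delta> by (simp add: pos_le_divide_eq mult.commute)
      have Kc0: "Kc \<ge> Q / P1" unfolding Kc_def by simp
      have Kc1: "Kc \<ge> 2 * LV * Q^2 / (\<kappa> * P1)" unfolding Kc_def by simp
      have "Q / P1 > 0" using Qpos P1 by simp
      then have d1pos: "d1 \<ge> 0" using d1K Kc0 \<delta> mult_nonneg_nonneg[of \<delta> Kc] by linarith
      have u0: "u t0 = u0" and ubnd: "\<And>t1. t1 \<ge> t0 \<Longrightarrow> \<exists>B. \<forall>t\<in>{t0..t1}. \<forall>j. \<bar>u t j\<bar> \<le> B"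
        and uder: "\<And>j t. t \<ge> t0 \<Longrightarrow> ((\<lambda>\<tau>. u \<tau> j) has_real_derivative E_rhs d f t (u t) j) (at t within {t0..})"
        using sol unfolding is_solution_E_def by auto
      have Erhs: "E_rhs d f t (u t) j = d t (j+1) * (u t (j+1) - u t j) + d t (j-1) * (u t (j-1) - u t j)
          + u t j * f t j (u t j)" for t j by (simp add: E_rhs_def)
      have u0nn: "u0 j \<ge> 0" for j using u0l by (simp add: l_inf_plus_def)
      have unn: "u t j \<ge> 0" if tt: "t \<ge> t0" for t j
      proof -
        obtain Bu where Bu: "\<forall>s\<in>{t0..t}. \<forall>i. \<bar>u s i\<bar> \<le> Bu" using ubnd[OF tt] by auto
        obtain Fu where Fu: "\<forall>s i v. \<bar>v\<bar> \<le> Bu \<longrightarrow> \<bar>f s i v\<bar> \<le> Fu" using fbound by blast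
        have "- u t j \<le> 0"
        proof (rule comparison[where w="\<lambda>s i. - u s i" and w'="\<lambda>s i. - E_rhs d f s (u s) i"
              and a=d and A=Bd and B=Bu and Bb=Fu and ta=t0 and tb=t])
          show "t0 \<le> t" using tt .
          show "t \<in> {t0..t}" using tt by simp
          show "- u t0 i \<le> 0" for i using u0nn[of i] u0 by simp
          show "- u s i \<le> Bu" if "s \<in> {t0..t}" for s i
          proof -
            have "\<bar>u s i\<bar> \<le> Bu" using Bu that by blast
            then show ?thesis by linarith
          qed
          show "((\<lambda>\<tau>. - u \<tau> i) has_real_derivative - E_rhs d f s (u s) i) (at s within {t0..})"
            if "s \<in> {t0..t}" for s i using DERIV_minus[OF uder[of s i]] that by simp
          show "0 \<le> d s i \<and> d s i \<le> Bd" for s i using dA .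
          show "- E_rhs d f s (u s) i \<le> d s (i+1) * (- u s (i+1) - - u s i) + d s (i-1) * (- u s (i-1) - - u s i)
              + Fu * - u s i" if "s \<in> {t0..t}" "- u s i > 0" for s i
          proof -
            have "\<bar>u s i\<bar> \<le> Bu" using Bu that(1) by blast
            then have "\<bar>f s i (u s i)\<bar> \<le> Fu" using Fu by blast
            then have "f s i (u s i) \<le> Fu" by linarith
            then have "(- u s i) * f s i (u s i) \<le> (- u s i) * Fu" using that(2) by (intro mult_left_mono) auto
            then show ?thesis unfolding Erhs by (simp add: algebra_simps)
          qed
        qed
        then show ?thesis by simp
      qed
      have upper: "u t j \<le> \<delta> * (exp (- \<mu> * (j - c * t)) * psi \<mu> t j)
                   + d1 * (exp (- \<mu>' * (j - c * t)) * psi \<mu>' t j)"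
        if hyp: "\<forall>j. u0 j \<le> \<delta> * (exp (- \<mu> * (j - c * t0)) * psi \<mu> t0 j)
                   + d1 * (exp (- \<mu>' * (j - c * t0)) * psi \<mu>' t0 j)"
          and tt: "t0 \<le> t" for t j
      proof -
        obtain Bu where Bu: "\<forall>s\<in>{t0..t}. \<forall>i. \<bar>u s i\<bar> \<le> Bu" using ubnd[OF tt] by auto
        obtain Fu where Fu: "\<forall>s i v. \<bar>v\<bar> \<le> Bu \<longrightarrow> \<bar>f s i v\<bar> \<le> Fu" using fbound by blast
        define S where "S s i = \<delta> * phi \<mu> s i + d1 * phi \<mu>' s i" for s i
        have Spos: "S s i > 0" for s i
        proof -
          have "\<delta> * phi \<mu> s i > 0" using phipos \<delta> by simp
          moreover have "d1 * phi \<mu>' s i \<ge> 0" using phipos[of \<mu>' s i] d1pos by simp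
          ultimately show ?thesis by (simp add: S_def)
        qed
        have "u t j - S t j \<le> 0"
        proof (rule comparison[where w="\<lambda>s i. u s i - S s i"
              and w'="\<lambda>s i. E_rhs d f s (u s) i - (\<delta> * Dphi \<mu> s i + d1 * Dphi \<mu>' s i)"
              and a=d and A=Bd and B=Bu and Bb=Fu and ta=t0 and tb=t])
          show "t0 \<le> t" using tt .
          show "t \<in> {t0..t}" using tt by simp
          show "u t0 i - S t0 i \<le> 0" for i using hyp u0 by (simp add: S_def phi_def)
          show "u s i - S s i \<le> Bu" if "s \<in> {t0..t}" for s i
          proof -
            have "\<bar>u s i\<bar> \<le> Bu" using Bu that by blast
            then show ?thesis using Spos[of s i] by linarith
          qed
          show "((\<lambda>\<tau>. u \<tau> i - S \<tau> i) has_real_derivative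
              E_rhs d f s (u s) i - (\<delta> * Dphi \<mu> s i + d1 * Dphi \<mu>' s i)) (at s within {t0..})"
            if "s \<in> {t0..t}" for s i
            unfolding S_def using that by (intro DERIV_diff DERIV_add DERIV_cmult uder phi_der') auto
          show "0 \<le> d s i \<and> d s i \<le> Bd" for s i using dA .
          show "E_rhs d f s (u s) i - (\<delta> * Dphi \<mu> s i + d1 * Dphi \<mu>' s i)
              \<le> d s (i+1) * ((u s (i+1) - S s (i+1)) - (u s i - S s i))
                + d s (i-1) * ((u s (i-1) - S s (i-1)) - (u s i - S s i)) + Fu * (u s i - S s i)"
            if "s \<in> {t0..t}" "u s i - S s i > 0" for s i
          proof -
            define U where "U = u s i"
            have iden: "E_rhs d f s (u s) i - (\<delta> * Dphi \<mu> s i + d1 * Dphi \<mu>' s i)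
              = d s (i+1) * ((u s (i+1) - S s (i+1)) - (u s i - S s i))
                + d s (i-1) * ((u s (i-1) - S s (i-1)) - (u s i - S s i))
                + (U * f s i U - f s i 0 * S s i - d1 * \<kappa> * phi \<mu>' s i)"
              unfolding Erhs Dphi_def S_def U_def \<kappa>_def kmu by (simp add: algebra_simps)
            have SU: "0 < S s i" "S s i < U" using Spos that(2) U_def by auto
            have fle: "f s i U \<le> f s i 0" using fmono[of 0 U s i] SU by simp
            have "\<bar>U\<bar> \<le> Bu" using Bu that(1) U_def by blast
            then have "\<bar>f s i U\<bar> \<le> Fu" using Fu by blast
            then have fFu: "f s i U \<le> Fu" by linarith
            have k1: "(f s i U - f s i 0) * S s i \<le> 0" using fle SU by (simp add: mult_nonpos_nonneg)
            have k2: "f s i U * (U - S s i) \<le> Fu * (U - S s i)" using fFu SU by (intro mult_right_mono) auto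
            have k3: "0 \<le> d1 * \<kappa> * phi \<mu>' s i" using d1pos kpos phipos[of \<mu>' s i] by simp
            have "U * f s i U - f s i 0 * S s i = f s i U * (U - S s i) + (f s i U - f s i 0) * S s i"
              by (simp add: algebra_simps)
            then have "U * f s i U - f s i 0 * S s i - d1 * \<kappa> * phi \<mu>' s i \<le> Fu * (U - S s i)"
              using k1 k2 k3 by linarith
            then show ?thesis unfolding iden U_def by linarith
          qed
        qed
        then show ?thesis by (simp add: S_def phi_def)
      qed
      show "(\<forall>j. u0 j \<le> \<delta> * (exp (- \<mu> * (j - c * t0)) * psi \<mu> t0 j)
                   + d1 * (exp (- \<mu>' * (j - c * t0)) * psi \<mu>' t0 j)) \<longrightarrow>
        (\<forall>t\<ge>t0. \<forall>j. u t j \<le> \<delta> * (exp (- \<mu> * (j - c * t)) * psi \<mu> t j)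
                   + d1 * (exp (- \<mu>' * (j - c * t)) * psi \<mu>' t j))"
        using upper by blast
      show "(\<forall>j. u0 j \<ge> \<delta> * (exp (- \<mu> * (j - c * t0)) * psi \<mu> t0 j)
                   - d1 * (exp (- \<mu>' * (j - c * t0)) * psi \<mu>' t0 j)) \<longrightarrow>
        (\<forall>t\<ge>t0. \<forall>j. u t j \<ge> \<delta> * (exp (- \<mu> * (j - c * t)) * psi \<mu> t j)
                   - d1 * (exp (- \<mu>' * (j - c * t)) * psi \<mu>' t j))"
      proof -
        define V where "V s i = \<delta> * phi \<mu> s i - d1 * phi \<mu>' s i" for s i
        have vfacts: "V s i \<le> 2*Q \<and> LV * (V s i)^2 \<le> d1 * \<kappa> * phi \<mu>' s i" if vp: "V s i > 0" for s i
        proof -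
          define x where "x = real_of_int i - c * s"
          define e1 where "e1 = exp (- \<mu> * x)"
          define e2 where "e2 = exp (- \<mu>' * x)"
          have ph: "phi \<mu> s i = e1 * psi \<mu> s i" "phi \<mu>' s i = e2 * psi \<mu>' s i"
            by (simp_all add: phi_def e1_def e2_def x_def)
          have e1p: "e1 > 0" "e2 > 0" by (simp_all add: e1_def e2_def)
          have ps: "0 < psi \<mu> s i" "psi \<mu> s i \<le> Q" "P1 \<le> psi \<mu>' s i" using psi_pos Q P1 by auto
          have a1: "\<delta> * phi \<mu> s i \<le> \<delta> * e1 * Q"
          proof -
            have "e1 * psi \<mu> s i \<le> e1 * Q" using ps e1p by (intro mult_left_mono) auto
            then show ?thesis unfolding ph using \<delta> by (simp add: mult.assoc mult_left_mono)
          qed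
          have a2: "d1 * phi \<mu>' s i \<ge> d1 * (e2 * P1)"
          proof -
            have "e2 * P1 \<le> e2 * psi \<mu>' s i" using ps e1p by (intro mult_left_mono) auto
            then show ?thesis unfolding ph using d1pos by (simp add: mult_left_mono)
          qed
          have dQ: "\<delta> * Q \<le> d1 * P1"
          proof -
            have "\<delta> * (Q / P1) \<le> \<delta> * Kc" using Kc0 \<delta> by (intro mult_left_mono) auto
            then have "\<delta> * (Q / P1) \<le> d1" using d1K by linarith
            then have "\<delta> * (Q / P1) * P1 \<le> d1 * P1" using P1 by (intro mult_right_mono) auto
            then show ?thesis using P1 by simp
          qed
          have a3: "\<delta> * Q * e2 \<le> d1 * (e2 * P1)"
            using mult_right_mono[OF dQ, of e2] e1p by (simp add: algebra_simps)
          from vp have "\<delta> * phi \<mu> s i > d1 * phi \<mu>' s i" by (simp add: V_def)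
          then have "\<delta> * Q * e2 < \<delta> * Q * e1" using a1 a2 a3 by (simp add: algebra_simps)
          moreover have "\<delta> * Q > 0" using \<delta> Qpos by simp
          ultimately have "e2 < e1" using mult_less_cancel_left_pos by blast
          then have "- \<mu>' * x < - \<mu> * x" unfolding e1_def e2_def by simp
          then have "(\<mu>' - \<mu>) * x > 0" by (simp add: algebra_simps)
          then have xpos: "x > 0" using mu_bounds(2) by (simp add: zero_less_mult_iff)
          have "\<mu> * x > 0" using xpos mu_bounds(1) by simp
          then have e1le: "e1 \<le> 1" unfolding e1_def by simp
          have Vle: "V s i \<le> \<delta> * e1 * Q"
          proof -
            have "d1 * phi \<mu>' s i \<ge> 0" using d1pos phipos[of \<mu>' s i] by simp
            then show ?thesis using a1 by (simp add: V_def)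
          qed
          have "\<delta> * e1 \<le> 2 * 1" using \<delta> e1le e1p by (intro mult_mono) auto
          then have "\<delta> * e1 * Q \<le> 2 * Q" using Qpos by (intro mult_right_mono) auto
          then have V2Q: "V s i \<le> 2 * Q" using Vle by linarith
          have "(V s i)^2 \<le> (\<delta> * e1 * Q)^2" using vp Vle by (intro power_mono) auto
          also have "\<dots> = \<delta>^2 * e1^2 * Q^2" by (simp add: power_mult_distrib)
          also have "\<dots> \<le> (2*\<delta>) * e2 * Q^2"
          proof -
            have "e1^2 = exp (- \<mu> * x + - \<mu> * x)" by (simp add: e1_def power2_eq_square mult_exp_exp)
            also have "\<dots> \<le> e2" unfolding e2_def using xpos mu_bounds(3)
              by (simp add: algebra_simps mult_right_mono)
            finally have ee: "e1^2 \<le> e2" .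
            have dd: "\<delta>^2 \<le> 2*\<delta>" using \<delta> by (simp add: power2_eq_square mult_right_mono)
            have "\<delta>^2 * e1^2 \<le> (2*\<delta>) * e2" using ee dd \<delta> by (intro mult_mono) auto
            then show ?thesis by (intro mult_right_mono) auto
          qed
          finally have V2: "(V s i)^2 \<le> 2 * \<delta> * e2 * Q^2" .
          have "LV * (V s i)^2 \<le> LV * (2 * \<delta> * e2 * Q^2)" using V2 LV0' by (intro mult_left_mono) auto
          also have "\<dots> \<le> d1 * \<kappa> * phi \<mu>' s i"
          proof -
            have "\<delta> * (2 * LV * Q^2 / (\<kappa> * P1)) \<le> \<delta> * Kc" using Kc1 \<delta> by (intro mult_left_mono) auto
            then have "\<delta> * (2 * LV * Q^2 / (\<kappa> * P1)) \<le> d1" using d1K by linarith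
            then have "\<delta> * (2 * LV * Q^2 / (\<kappa> * P1)) * (\<kappa> * P1 * e2) \<le> d1 * (\<kappa> * P1 * e2)"
              using kpos P1 e1p by (intro mult_right_mono) auto
            moreover have "\<delta> * (2 * LV * Q^2 / (\<kappa> * P1)) * (\<kappa> * P1 * e2) = LV * (2 * \<delta> * e2 * Q^2)"
              using kpos P1 by (simp add: field_simps)
            moreover have "d1 * (\<kappa> * P1 * e2) \<le> d1 * \<kappa> * phi \<mu>' s i"
            proof -
              have "d1 * \<kappa> * (e2 * P1) \<le> d1 * \<kappa> * (e2 * psi \<mu>' s i)"
                using d1pos kpos e1p ps by (intro mult_left_mono) auto
              then show ?thesis unfolding ph by (simp add: algebra_simps)
            qed
            ultimately show ?thesis by linarith
          qed
          finally show ?thesis using V2Q by simp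
        qed
        have lower: "V t j \<le> u t j" if hyp: "\<forall>j. V t0 j \<le> u0 j" and tt: "t0 \<le> t" for t j
        proof -
          obtain Bu where Bu: "\<forall>s\<in>{t0..t}. \<forall>i. \<bar>u s i\<bar> \<le> Bu" using ubnd[OF tt] by auto
          obtain Fl where Fl: "\<forall>s i v. \<bar>v\<bar> \<le> 2*Q \<longrightarrow> \<bar>f s i v\<bar> \<le> Fl" using fbound by blast
          have "V t j - u t j \<le> 0"
          proof (rule comparison[where w="\<lambda>s i. V s i - u s i"
                and w'="\<lambda>s i. (\<delta> * Dphi \<mu> s i - d1 * Dphi \<mu>' s i) - E_rhs d f s (u s) i"
                and a=d and A=Bd and B="2*Q" and Bb=Fl and ta=t0 and tb=t])
            show "t0 \<le> t" using tt .
            show "t \<in> {t0..t}" using tt by simp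
            show "V t0 i - u t0 i \<le> 0" for i using hyp u0 by (simp add: V_def)
            show "V s i - u s i \<le> 2*Q" if "s \<in> {t0..t}" for s i
            proof (cases "V s i > 0")
              case True then show ?thesis using vfacts[OF True] unn[of s i] that by auto
            next
              case False then show ?thesis using unn[of s i] that Qpos by auto
            qed
            show "((\<lambda>\<tau>. V \<tau> i - u \<tau> i) has_real_derivative
                (\<delta> * Dphi \<mu> s i - d1 * Dphi \<mu>' s i) - E_rhs d f s (u s) i) (at s within {t0..})"
              if "s \<in> {t0..t}" for s i
              unfolding V_def using that by (intro DERIV_diff DERIV_cmult uder phi_der') auto
            show "0 \<le> d s i \<and> d s i \<le> Bd" for s i using dA .
            show "(\<delta> * Dphi \<mu> s i - d1 * Dphi \<mu>' s i) - E_rhs d f s (u s) i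
                \<le> d s (i+1) * ((V s (i+1) - u s (i+1)) - (V s i - u s i))
                  + d s (i-1) * ((V s (i-1) - u s (i-1)) - (V s i - u s i)) + Fl * (V s i - u s i)"
              if st: "s \<in> {t0..t}" "V s i - u s i > 0" for s i
            proof -
              define U where "U = u s i"
              define W where "W = V s i"
              have iden: "(\<delta> * Dphi \<mu> s i - d1 * Dphi \<mu>' s i) - E_rhs d f s (u s) i
                = d s (i+1) * ((V s (i+1) - u s (i+1)) - (V s i - u s i))
                  + d s (i-1) * ((V s (i-1) - u s (i-1)) - (V s i - u s i))
                  + (f s i 0 * W - d1 * \<kappa> * phi \<mu>' s i - U * f s i U)"
                unfolding Erhs Dphi_def V_def U_def W_def \<kappa>_def kmu by (simp add: algebra_simps)
              have U0: "U \<ge> 0" using unn[of s i] st(1) U_def by simp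
              have UW: "U < W" using st(2) U_def W_def by simp
              have Wp: "W > 0" using U0 UW by linarith
              from vfacts[of s i] Wp have W2Q: "W \<le> 2*Q" and Wq: "LV * W^2 \<le> d1 * \<kappa> * phi \<mu>' s i"
                by (simp_all add: W_def)
              have fUW: "f s i W \<le> f s i U" using fmono[of U W s i] U0 UW by simp
              have "\<bar>f s i 0 - f s i W\<bar> \<le> LV * \<bar>0 - W\<bar>" using LV[of 0 W s i] W2Q Wp Qpos by simp
              then have "f s i 0 - f s i W \<le> LV * W" using Wp by simp
              then have "(f s i 0 - f s i U) * W \<le> (LV * W) * W" using fUW Wp
                by (intro mult_right_mono) auto
              then have k1: "(f s i 0 - f s i U) * W \<le> d1 * \<kappa> * phi \<mu>' s i"
                using Wq by (simp add: power2_eq_square algebra_simps)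
              have "\<bar>U\<bar> \<le> 2*Q" using U0 UW W2Q by simp
              then have "\<bar>f s i U\<bar> \<le> Fl" using Fl by blast
              then have "f s i U \<le> Fl" by linarith
              then have k2: "f s i U * (W - U) \<le> Fl * (W - U)" using UW by (intro mult_right_mono) auto
              have "f s i 0 * W - U * f s i U = f s i U * (W - U) + (f s i 0 - f s i U) * W"
                by (simp add: algebra_simps)
              then have "f s i 0 * W - d1 * \<kappa> * phi \<mu>' s i - U * f s i U \<le> Fl * (W - U)"
                using k1 k2 by linarith
              then show ?thesis unfolding iden U_def W_def by linarith
            qed
          qed
          then show ?thesis by simp
        qed
        show ?thesis
          using lower unfolding V_def phi_def by auto
      qed
    qed
  qed
qed

end
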